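(* Assume $G$ is an algebraic torus. Let $(\delta,\delta')$ be an adjacent pair in $\mathsf M_{\mathbb R}\setminus\mathcal H$, separated by $H\in\mathcal H$, let $\delta_0$ be the point where $[\delta,\delta']$ meets $H$, and let $F$ be the unique facet of $\delta_0+\boldsymbol\nabla$ parallel to $H$ with $F\cap(\delta+\boldsymbol\nabla)\neq\emptyset$. Then for every $\chi\in\mathcal C_\delta\setminus\mathcal C_{\delta'}$ and every $\beta\in\bigwedge^*\mathcal W_F^+$, we have $\chi+\beta\in\mathcal C_\delta\cap\mathcal C_{\delta'}$.
   Context: $G$ is an algebraic torus over an algebraically closed field of characteristic $0$ with character lattice $\mathsf M$, cocharacter lattice $\mathsf N$, pairing $\langle-,-\rangle$. $X$ is a quasi-symmetric $G$-representation with weights $\beta_1,\dots,\beta_d$ (for each line $L\subset\mathsf M_{\mathbb R}$, $\sum_{\beta_i\in L}\beta_i=0$); $\boldsymbol\Sigma=\{\sum a_i\beta_i:a_i\in[0,1]\}$ spans $\mathsf M_{\mathbb R}$, and the complement of the linear hyperplanes parallel to facets of $\boldsymbol\Sigma$ is nonempty. Here $\boldsymbol\nabla=\tfrac12\boldsymbol\Sigma$ (for a torus, $\boldsymbol\nabla=\{\chi:|\langle\chi,\lambda\rangle|\le\eta_\lambda/2\}$ with $\eta_\lambda=\sum_{\langle\beta_i,\lambda\rangle<0}(-\langle\beta_i,\lambda\rangle)$, which equals $\tfrac12\boldsymbol\Sigma$). $\mathcal H$ = affine hyperplanes $m+B$ with $m\in\mathsf M$ and $B\cap\boldsymbol\nabla$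 a facet of $\boldsymbol\nabla$; $(\delta,\delta')$ adjacent: $\delta,\delta'$ avoid all of $\mathcal H$ and exactly one member of $\mathcal H$ meets $[\delta,\delta']$. $\mathcal C_\delta=(\delta+\boldsymbol\nabla)\cap\mathsf M$. For the facet $F$ with inward normal $\lambda_F\in\mathsf N_{\mathbb R}$ (so $\delta_0+\boldsymbol\nabla$ lies on the side $\langle x,\lambda_F\rangle\ge c$), $\mathcal W_F^+=\{i:\langle\beta_i,\lambda_F\rangle>0\}$, $d_F^+=\#\mathcal W_F^+$, and $\bigwedge^*\mathcal W_F^+$ is the set of sums $\sum_{i\in S}\beta_i$ over subsets $S\subseteq\mathcal W_F^+$ with $1\le\#S\le d_F^+-1$. *)

theory Defs
  imports "HOL-Analysis.Analysis"
begin

text \<open>Model: the character lattice M of the torus is identified with the integer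
  points of real^'n, M_R = real^'n, N = M^dual = integer points as well, and the
  pairing is the standard inner product.\<close>

definition lattice_pts :: "(real^'n) set" where
  "lattice_pts = {x. \<forall>i. x $ i \<in> \<int>}"

definition zonotope :: "nat \<Rightarrow> (nat \<Rightarrow> real^'n) \<Rightarrow> (real^'n) set" where
  "zonotope d \<beta> = {(\<Sum>i<d. a i *\<^sub>R \<beta> i) | a. \<forall>i<d. 0 \<le> a i \<and> a i \<le> 1}"

definition nabla :: "nat \<Rightarrow> (nat \<Rightarrow> real^'n) \<Rightarrow> (real^'n) set" where
  "nabla d \<beta> = (\<lambda>x. (1/2) *\<^sub>R x) ` zonotope d \<beta>"

definition quasi_symmetric :: "nat \<Rightarrow> (nat \<Rightarrow> real^'n) \<Rightarrow> bool" where
  "quasi_symmetric d \<beta> \<longleftrightarrow>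
     (\<forall>v. v \<noteq> 0 \<longrightarrow> (\<Sum>i\<in>{i. i < d \<and> \<beta> i \<in> span {v}}. \<beta> i) = 0)"

definition affine_hyperplane :: "(real^'n) set \<Rightarrow> bool" where
  "affine_hyperplane B \<longleftrightarrow> (\<exists>a b. a \<noteq> 0 \<and> B = {x. a \<bullet> x = b})"

definition hyps :: "nat \<Rightarrow> (nat \<Rightarrow> real^'n) \<Rightarrow> (real^'n) set set" where
  "hyps d \<beta> = {(\<lambda>x. m + x) ` B | m B. m \<in> lattice_pts \<and> affine_hyperplane B
                 \<and> (B \<inter> nabla d \<beta>) facet_of nabla d \<beta>}"

definition adjacent :: "nat \<Rightarrow> (nat \<Rightarrow> real^'n) \<Rightarrow> real^'n \<Rightarrow> real^'n \<Rightarrow> bool" where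
  "adjacent d \<beta> \<delta> \<delta>' \<longleftrightarrow>
     \<delta> \<notin> \<Union>(hyps d \<beta>) \<and> \<delta>' \<notin> \<Union>(hyps d \<beta>) \<and>
     (\<exists>!H. H \<in> hyps d \<beta> \<and> H \<inter> closed_segment \<delta> \<delta>' \<noteq> {})"

definition Cset :: "nat \<Rightarrow> (nat \<Rightarrow> real^'n) \<Rightarrow> real^'n \<Rightarrow> (real^'n) set" where
  "Cset d \<beta> \<delta> = ((\<lambda>x. \<delta> + x) ` nabla d \<beta>) \<inter> lattice_pts"

definition Wplus :: "nat \<Rightarrow> (nat \<Rightarrow> real^'n) \<Rightarrow> real^'n \<Rightarrow> nat set" where
  "Wplus d \<beta> l = {i. i < d \<and> \<beta> i \<bullet> l > 0}"

definition wedge_star :: "nat \<Rightarrow> (nat \<Rightarrow> real^'n) \<Rightarrow> real^'n \<Rightarrow> (real^'n) set" where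
  "wedge_star d \<beta> l = {(\<Sum>i\<in>S. \<beta> i) | S. S \<subseteq> Wplus d \<beta> l \<and> 1 \<le> card S
                          \<and> card S \<le> card (Wplus d \<beta> l) - 1}"

end

theory Submission
  imports Defs
begin

lemma span_single_eq:
  fixes x y :: "'a::real_vector"
  assumes "x \<in> span {y}" "x \<noteq> 0"
  shows "span {x} = span {y}"
proof -
  obtain k where k: "x = k *\<^sub>R y" using assms(1) by (auto simp: span_singleton)
  have "k \<noteq> 0" using assms(2) k by auto
  then have "y = (1/k) *\<^sub>R x" using k by auto
  then have "y \<in> span {x}" by (simp add: span_mul span_base) 
  show ?thesis
    using \<open>y \<in> span {x}\<close> assms(1) by (intro antisym span_minimal) auto
qed

lemma class_sum_zero:
  fixes \<beta> :: "nat \<Rightarrow> 'a::real_vector" and g :: "nat \<Rightarrow> 'b::comm_monoid_add"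
  assumes z: "\<And>j. j<d \<Longrightarrow> \<beta> j = 0 \<Longrightarrow> g j = 0"
  and cls: "\<And>i. i<d \<Longrightarrow> \<beta> i \<noteq> 0 \<Longrightarrow> (\<Sum>j\<in>{j. j<d \<and> \<beta> j \<in> span {\<beta> i}}. g j) = 0"
  shows "(\<Sum>j<d. g j) = 0"
proof -
  define Nz where "Nz = {j. j<d \<and> \<beta> j \<noteq> 0}"
  define C where "C i = {j\<in>Nz. \<beta> j \<in> span {\<beta> i}}" for i
  have finNz: "finite Nz" unfolding Nz_def by auto
  have cls': "sum g (C i) = 0" if "i \<in> Nz" for i
  proof -
    have "sum g (C i) = (\<Sum>j\<in>{j. j<d \<and> \<beta> j \<in> span {\<beta> i}}. g j)"
      by (rule sum.mono_neutral_left) (auto simp: C_def Nz_def z)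
    then show ?thesis using cls that Nz_def by auto
  qed
  have eqv: "C j = C i" if "i \<in> Nz" "j \<in> C i" for i j
  proof -
    have "span {\<beta> j} = span {\<beta> i}" using that by (intro span_single_eq) (auto simp: C_def Nz_def)
    then show ?thesis unfolding C_def by simp
  qed
  have self: "i \<in> C i" if "i \<in> Nz" for i using that by (auto simp: C_def span_base)
  have main: "\<forall>M. card M = n \<longrightarrow> M \<subseteq> Nz \<and> (\<forall>i\<in>M. C i \<subseteq> M) \<longrightarrow> sum g M = 0" for n
  proof (induction n rule: less_induct)
    case (less n)
    show ?case
    proof (intro allI impI)
      fix M assume cM: "card M = n" and M: "M \<subseteq> Nz \<and> (\<forall>i\<in>M. C i \<subseteq> M)"
      have finM: "finite M" using M finNz finite_subset by blast
      show "sum g M = 0"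
      proof (cases "M = {}")
        case True then show ?thesis by simp
      next
        case False
        then obtain i where i: "i \<in> M" by auto
        have iN: "i \<in> Nz" using i M by auto
        have CM: "C i \<subseteq> M" using i M by auto
        have M': "M - C i \<subseteq> Nz \<and> (\<forall>k\<in>M - C i. C k \<subseteq> M - C i)"
        proof (intro conjI ballI)
          show "M - C i \<subseteq> Nz" using M by auto
        next
          fix k assume k: "k \<in> M - C i"
          have kN: "k \<in> Nz" using k M by auto
          show "C k \<subseteq> M - C i"
          proof
            fix j assume j: "j \<in> C k"
            have "j \<in> M" using j k M by auto
            moreover have "j \<notin> C i"
            proof
              assume "j \<in> C i"
              then have "C j = C i" using eqv iN by auto
              moreover have "C j = C k" using eqv kN j by auto
              ultimately have "k \<in> C i" using self kN by auto
              then show False using k by auto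
            qed
            ultimately show "j \<in> M - C i" by auto
          qed
        qed
        have "M - C i \<subset> M" using i self[OF iN] by auto
        then have "card (M - C i) < n" using psubset_card_mono[OF finM] cM by blast
        then have "sum g (M - C i) = 0" using less M' by blast
        moreover have "sum g M = sum g (C i) + sum g (M - C i)"
          using CM finM by (metis sum.subset_diff add.commute)
        ultimately show ?thesis using cls'[OF iN] by simp
      qed
    qed
  qed
  have "Nz \<subseteq> Nz \<and> (\<forall>i\<in>Nz. C i \<subseteq> Nz)" by (auto simp: C_def)
  then have "sum g Nz = 0" using main[of "card Nz"] by blast
  moreover have "(\<Sum>j<d. g j) = sum g Nz"
    by (rule sum.mono_neutral_right) (auto simp: Nz_def z)
  ultimately show ?thesis by simp
qed


lemma nabla_mem:
  "z \<in> nabla d \<beta> \<longleftrightarrow> (\<exists>a. (\<forall>i<d. 0 \<le> a i \<and> a i \<le> 1) \<and> z = (\<Sum>i<d. (a i / 2) *\<^sub>R \<beta> i))"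
proof
  assume "z \<in> nabla d \<beta>"
  then show "\<exists>a. (\<forall>i<d. 0 \<le> a i \<and> a i \<le> 1) \<and> z = (\<Sum>i<d. (a i / 2) *\<^sub>R \<beta> i)"
    unfolding nabla_def zonotope_def by (auto simp: scaleR_sum_right)
next
  assume "\<exists>a. (\<forall>i<d. 0 \<le> a i \<and> a i \<le> 1) \<and> z = (\<Sum>i<d. (a i / 2) *\<^sub>R \<beta> i)"
  then obtain a where a: "\<forall>i<d. 0 \<le> a i \<and> a i \<le> 1" and z: "z = (\<Sum>i<d. (a i / 2) *\<^sub>R \<beta> i)" by blast
  have "z = (1/2) *\<^sub>R (\<Sum>i<d. a i *\<^sub>R \<beta> i)" unfolding z by (simp add: scaleR_sum_right)
  moreover have "(\<Sum>i<d. a i *\<^sub>R \<beta> i) \<in> zonotope d \<beta>" unfolding zonotope_def using a by blast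
  ultimately show "z \<in> nabla d \<beta>" unfolding nabla_def by blast
qed

lemma zonotope_convex: "convex (zonotope d \<beta>)"
  unfolding convex_def zonotope_def
proof (clarsimp)
  fix u v :: real and a b :: "nat \<Rightarrow> real"
  assume a: "\<forall>i<d. 0 \<le> a i \<and> a i \<le> 1" and b: "\<forall>i<d. 0 \<le> b i \<and> b i \<le> 1"
    and u: "0 \<le> u" "0 \<le> v" "u + v = 1"
  show "\<exists>c. u *\<^sub>R (\<Sum>i<d. a i *\<^sub>R \<beta> i) + v *\<^sub>R (\<Sum>i<d. b i *\<^sub>R \<beta> i) = (\<Sum>i<d. c i *\<^sub>R \<beta> i) \<and>
             (\<forall>i<d. 0 \<le> c i \<and> c i \<le> 1)"
  proof (intro exI conjI allI impI)
    show "u *\<^sub>R (\<Sum>i<d. a i *\<^sub>R \<beta> i) + v *\<^sub>R (\<Sum>i<d. b i *\<^sub>R \<beta> i) = (\<Sum>i<d. (u * a i + v * b i) *\<^sub>R \<beta> i)"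
      by (simp add: scaleR_sum_right sum.distrib[symmetric] scaleR_add_left)
  next
    fix i assume "i < d"
    then show "0 \<le> u * a i + v * b i" using a b u by auto
    have "u * a i + v * b i \<le> u * 1 + v * 1"
      using a b u \<open>i<d\<close> by (intro add_mono mult_left_mono) auto
    then show "u * a i + v * b i \<le> 1" using u by simp
  qed
qed

lemma zonotope_hull:
  "zonotope d \<beta> = convex hull ((\<lambda>S. \<Sum>i\<in>S. \<beta> i) ` Pow {..<d})"
proof
  show "convex hull ((\<lambda>S. \<Sum>i\<in>S. \<beta> i) ` Pow {..<d}) \<subseteq> zonotope d \<beta>"
  proof (rule hull_minimal)
    show "convex (zonotope d \<beta>)" by (rule zonotope_convex)
    show "(\<lambda>S. \<Sum>i\<in>S. \<beta> i) ` Pow {..<d} \<subseteq> zonotope d \<beta>"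
    proof clarify
      fix S assume S: "S \<subseteq> {..<d}"
      have "(\<Sum>i<d. (if i \<in> S then 1 else 0) *\<^sub>R \<beta> i) = (\<Sum>i<d. if i \<in> S then \<beta> i else 0)"
        by (rule sum.cong) auto
      also have "\<dots> = sum \<beta> ({..<d} \<inter> S)" by (simp add: sum.inter_restrict)
      also have "\<dots> = sum \<beta> S" using S by (simp add: Int_absorb1)
      finally have "(\<Sum>i\<in>S. \<beta> i) = (\<Sum>i<d. (if i \<in> S then 1 else 0) *\<^sub>R \<beta> i)" by simp
      then show "(\<Sum>i\<in>S. \<beta> i) \<in> zonotope d \<beta>" unfolding zonotope_def by force
    qed
  qed
next
  show "zonotope d \<beta> \<subseteq> convex hull ((\<lambda>S. \<Sum>i\<in>S. \<beta> i) ` Pow {..<d})"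
  proof (induction d)
    case 0
    then show ?case by (auto simp: zonotope_def hull_inc)
  next
    case (Suc d)
    define V where "V = (\<lambda>S. \<Sum>i\<in>S. \<beta> i) ` Pow {..<Suc d}"
    have sub1: "(\<lambda>S. \<Sum>i\<in>S. \<beta> i) ` Pow {..<d} \<subseteq> V" unfolding V_def
      by (intro image_mono) auto
    have sub2: "(\<lambda>x. \<beta> d + x) ` ((\<lambda>S. \<Sum>i\<in>S. \<beta> i) ` Pow {..<d}) \<subseteq> V"
    proof clarify
      fix S assume S: "S \<subseteq> {..<d}"
      have "\<beta> d + (\<Sum>i\<in>S. \<beta> i) = (\<Sum>i\<in>insert d S. \<beta> i)"
        using S by (subst sum.insert) (auto intro: finite_subset)
      moreover have "insert d S \<in> Pow {..<Suc d}" using S by auto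
      ultimately show "\<beta> d + (\<Sum>i\<in>S. \<beta> i) \<in> V" unfolding V_def by blast
    qed
    show ?case unfolding V_def[symmetric]
    proof
      fix z assume "z \<in> zonotope (Suc d) \<beta>"
      then obtain a where a: "\<forall>i<Suc d. 0 \<le> a i \<and> a i \<le> 1" and z: "z = (\<Sum>i<Suc d. a i *\<^sub>R \<beta> i)"
        unfolding zonotope_def by auto
      define p where "p = (\<Sum>i<d. a i *\<^sub>R \<beta> i)"
      have "p \<in> zonotope d \<beta>" unfolding zonotope_def p_def using a by auto
      then have p: "p \<in> convex hull ((\<lambda>S. \<Sum>i\<in>S. \<beta> i) ` Pow {..<d})" using Suc by auto
      then have p1: "p \<in> convex hull V" using hull_mono[OF sub1] by auto
      have "\<beta> d + p \<in> (\<lambda>x. \<beta> d + x) ` (convex hull ((\<lambda>S. \<Sum>i\<in>S. \<beta> i) ` Pow {..<d}))"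
        using p by auto
      then have "\<beta> d + p \<in> convex hull ((\<lambda>x. \<beta> d + x) ` ((\<lambda>S. \<Sum>i\<in>S. \<beta> i) ` Pow {..<d}))"
        by (simp add: convex_hull_translation)
      then have p2: "\<beta> d + p \<in> convex hull V" using hull_mono[OF sub2] by auto
      have "z = (1 - a d) *\<^sub>R p + a d *\<^sub>R (\<beta> d + p)"
        unfolding z p_def by (simp add: algebra_simps)
      moreover have "0 \<le> a d" "a d \<le> 1" using a by auto
      ultimately show "z \<in> convex hull V"
        using convexD[OF convex_convex_hull p1 p2, of "1 - a d" "a d"] by simp
    qed
  qed
qed

lemma polytope_nabla: "polytope (nabla d \<beta>)"
proof -
  have "polytope (zonotope d \<beta>)" unfolding zonotope_hull by (rule polytope_convex_hull) auto
  then show ?thesis unfolding nabla_def by (rule polytope_linear_image[rotated]) (simp add: linear_scaleR)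
qed

lemma nabla_neg:
  assumes "(\<Sum>i<d. \<beta> i) = 0" "z \<in> nabla d \<beta>"
  shows "- z \<in> nabla d \<beta>"
proof -
  obtain a where a: "\<forall>i<d. 0 \<le> a i \<and> a i \<le> 1" and z: "z = (\<Sum>i<d. (a i / 2) *\<^sub>R \<beta> i)"
    using assms(2) nabla_mem by blast
  have "- z = (\<Sum>i<d. ((1 - a i) / 2) *\<^sub>R \<beta> i) - (1/2) *\<^sub>R (\<Sum>i<d. \<beta> i)"
    unfolding z by (simp add: scaleR_sum_right sum_subtractf[symmetric] sum_negf[symmetric] algebra_simps diff_divide_distrib)
  also have "\<dots> = (\<Sum>i<d. ((1 - a i) / 2) *\<^sub>R \<beta> i)" using assms(1) by simp
  finally show ?thesis unfolding nabla_mem using a by (intro exI[of _ "\<lambda>i. 1 - a i"]) auto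
qed

lemma nabla_affine_hull:
  assumes "span (zonotope d \<beta>) = UNIV"
  shows "affine hull (nabla d \<beta>) = UNIV"
proof -
  have z0: "0 \<in> nabla d \<beta>" unfolding nabla_mem by (intro exI[of _ "\<lambda>i. 0"]) auto
  have "span (nabla d \<beta>) = UNIV"
  proof -
    have "zonotope d \<beta> \<subseteq> span (nabla d \<beta>)"
    proof
      fix x assume "x \<in> zonotope d \<beta>"
      then have "(1/2) *\<^sub>R x \<in> nabla d \<beta>" unfolding nabla_def by auto
      then have "2 *\<^sub>R ((1/2) *\<^sub>R x) \<in> span (nabla d \<beta>)" by (intro span_mul span_base)
      then show "x \<in> span (nabla d \<beta>)" by simp
    qed
    then have "span (zonotope d \<beta>) \<subseteq> span (nabla d \<beta>)" by (intro span_minimal) auto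
    then show ?thesis using assms by auto
  qed
  then show ?thesis using affine_hull_span_0[of "nabla d \<beta>"] z0 hull_inc by metis
qed


lemma hyp_sub:
  fixes a l :: "real^'n"
  assumes a: "a \<noteq> 0" and l: "l \<noteq> 0" and sub: "{z. a \<bullet> z = e} \<subseteq> {z. l \<bullet> z = k}"
  shows "\<exists>r. r \<noteq> 0 \<and> l = r *\<^sub>R a \<and> k = r * e"
proof -
  define z0 where "z0 = (e / (a\<bullet>a)) *\<^sub>R a"
  have aa: "a\<bullet>a \<noteq> 0" using a by simp
  have z0: "a \<bullet> z0 = e" using aa by (simp add: z0_def)
  define r where "r = (l\<bullet>a)/(a\<bullet>a)"
  define v where "v = l - r *\<^sub>R a"
  have av: "a \<bullet> v = 0" using aa by (simp add: v_def r_def inner_diff_right inner_commute)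
  have "a \<bullet> (z0 + v) = e" using z0 av by (simp add: inner_add_right)
  then have "l \<bullet> (z0 + v) = k" using sub by auto
  moreover have lz: "l \<bullet> z0 = k" using z0 sub by auto
  ultimately have lv: "l \<bullet> v = 0" by (simp add: inner_add_right)
  have "v \<bullet> v = l \<bullet> v - r * (a \<bullet> v)" by (simp add: v_def inner_diff_left inner_commute)
  then have "v = 0" using lv av by simp
  then have lr: "l = r *\<^sub>R a" by (simp add: v_def)
  have "r \<noteq> 0" using l lr by auto
  moreover have "k = r * e" using lz lr z0 by simp
  ultimately show ?thesis using lr by blast
qed

lemma seg_hyp_unique:
  fixes l \<delta> \<delta>' p q :: "real^'n"
  assumes "l \<bullet> \<delta> \<noteq> k" "p \<in> closed_segment \<delta> \<delta>'" "q \<in> closed_segment \<delta> \<delta>'" "l \<bullet> p = k" "l \<bullet> q = k"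
  shows "p = q"
proof -
  obtain s where s: "p = (1-s) *\<^sub>R \<delta> + s *\<^sub>R \<delta>'" using assms(2) by (auto simp: closed_segment_def)
  obtain t where t: "q = (1-t) *\<^sub>R \<delta> + t *\<^sub>R \<delta>'" using assms(3) by (auto simp: closed_segment_def)
  have ps: "l\<bullet>p = l\<bullet>\<delta> + s * (l\<bullet>\<delta>' - l\<bullet>\<delta>)" by (simp add: s inner_add_right algebra_simps)
  have qt: "l\<bullet>q = l\<bullet>\<delta> + t * (l\<bullet>\<delta>' - l\<bullet>\<delta>)" by (simp add: t inner_add_right algebra_simps)
  have D: "l\<bullet>\<delta>' - l\<bullet>\<delta> \<noteq> 0" using ps assms(1,4) by auto
  have "s * (l\<bullet>\<delta>' - l\<bullet>\<delta>) = t * (l\<bullet>\<delta>' - l\<bullet>\<delta>)" using ps qt assms(4,5) by simp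
  then have "s = t" using D by simp
  then show ?thesis using s t by simp
qed

lemma facet_neg:
  fixes G S :: "(real^'n) set"
  assumes "G facet_of S"
  shows "(uminus ` G) facet_of (uminus ` S)"
proof -
  have lin: "linear (uminus :: real^'n \<Rightarrow> real^'n)" by (rule linear_uminus)
  have inj: "inj (uminus :: real^'n \<Rightarrow> real^'n)" by (simp add: inj_def)
  show ?thesis using assms unfolding facet_of_def
    by (simp add: face_of_linear_image[OF lin inj] aff_dim_injective_linear_image[OF lin inj])
qed

theorem lemma4p12:
  fixes d :: nat and \<beta> :: "nat \<Rightarrow> real^'n"
    and \<delta> \<delta>' \<delta>0 lamF :: "real^'n" and c :: real
    and H F :: "(real^'n) set"
  assumes weights: "\<forall>i<d. \<beta> i \<in> lattice_pts"
    and qs: "quasi_symmetric d \<beta>"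
    and spans: "span (zonotope d \<beta>) = UNIV"
    and generic: "\<exists>x. \<forall>P. P facet_of zonotope d \<beta> \<longrightarrow> x \<notin> span {a - b | a b. a \<in> P \<and> b \<in> P}"
    and adj: "adjacent d \<beta> \<delta> \<delta>'"
    and H: "H \<in> hyps d \<beta>" "H \<inter> closed_segment \<delta> \<delta>' \<noteq> {}"
    and d0: "\<delta>0 \<in> closed_segment \<delta> \<delta>'" "\<delta>0 \<in> H"
    and F: "F facet_of ((\<lambda>x. \<delta>0 + x) ` nabla d \<beta>)"
    and Fpar: "\<exists>t. affine hull F = (\<lambda>x. t + x) ` H"
    and Fmeet: "F \<inter> ((\<lambda>x. \<delta> + x) ` nabla d \<beta>) \<noteq> {}"
    and normal: "lamF \<noteq> 0" "\<forall>x\<in>(\<lambda>x. \<delta>0 + x) ` nabla d \<beta>. x \<bullet> lamF \<ge> c"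
                "\<forall>x\<in>F. x \<bullet> lamF = c"
  shows "\<forall>chi\<in>Cset d \<beta> \<delta> - Cset d \<beta> \<delta>'. \<forall>b\<in>wedge_star d \<beta> lamF.
           chi + b \<in> Cset d \<beta> \<delta> \<inter> Cset d \<beta> \<delta>'"
proof -
  let ?N = "nabla d \<beta>"
  have sumb: "(\<Sum>i<d. \<beta> i) = 0"
  proof (rule class_sum_zero[where \<beta>=\<beta> and g=\<beta>])
    fix i assume "i<d" "\<beta> i \<noteq> 0"
    then show "(\<Sum>j\<in>{j. j<d \<and> \<beta> j \<in> span {\<beta> i}}. \<beta> j) = 0"
      using qs unfolding quasi_symmetric_def by blast
  qed simp
  have Nneg: "-z \<in> ?N" if "z \<in> ?N" for z using nabla_neg[OF sumb that] .
  have Nimg: "uminus ` ?N = ?N"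
  proof
    show "uminus ` ?N \<subseteq> ?N" using Nneg by blast
    show "?N \<subseteq> uminus ` ?N"
    proof
      fix z assume "z \<in> ?N"
      then have "-z \<in> ?N" by (rule Nneg)
      then show "z \<in> uminus ` ?N" by (rule rev_image_eqI) simp
    qed
  qed
  have polyN: "polyhedron ?N" by (rule polytope_imp_polyhedron[OF polytope_nabla])
  have closedN: "closed ?N" by (rule polyhedron_imp_closed[OF polyN])
  have affN: "affine hull ?N = UNIV" by (rule nabla_affine_hull[OF spans])
  have intN: "rel_interior ?N = interior ?N" using rel_interior_interior[OF affN] by simp

  obtain m B where HmB: "H = (\<lambda>x. m + x) ` B" and Bh: "affine_hyperplane B"
    using H(1) unfolding hyps_def by blast
  obtain a0 b0 where a0: "a0 \<noteq> 0" and B: "B = {x. a0 \<bullet> x = b0}"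
    using Bh unfolding affine_hyperplane_def by blast
  have Heq0: "H = {z. a0 \<bullet> z = b0 + a0 \<bullet> m}"
  proof (rule set_eqI)
    fix z show "z \<in> H \<longleftrightarrow> z \<in> {z. a0 \<bullet> z = b0 + a0 \<bullet> m}"
      unfolding HmB B by (auto simp: image_iff inner_add_right inner_diff_right intro!: exI[of _ "z - m"])
  qed
  obtain t where t: "affine hull F = (\<lambda>x. t + x) ` H" using Fpar by blast
  have hypc: "{x. x \<bullet> lamF = c} = {x. lamF \<bullet> x = c}" by (auto simp: inner_commute)
  have "affine hull F \<subseteq> {x. x \<bullet> lamF = c}"
    by (rule hull_minimal) (use normal(3) hypc affine_hyperplane in auto)
  then have Hsub: "H \<subseteq> {z. lamF \<bullet> z = c - lamF \<bullet> t}"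
  proof (intro subsetI CollectI)
    fix z assume sub: "affine hull F \<subseteq> {x. x \<bullet> lamF = c}" and z: "z \<in> H"
    have "t + z \<in> affine hull F" using t z by auto
    then have "(t + z) \<bullet> lamF = c" using sub by auto
    then show "lamF \<bullet> z = c - lamF \<bullet> t" by (simp add: inner_add_left inner_add_right inner_commute)
  qed
  obtain r0 where r0: "r0 \<noteq> 0" "lamF = r0 *\<^sub>R a0" "c - lamF \<bullet> t = r0 * (b0 + a0 \<bullet> m)"
    using hyp_sub[OF a0 normal(1), of "b0 + a0 \<bullet> m" "c - lamF \<bullet> t"] Hsub Heq0 by auto
  have Hlam: "H = {z. lamF \<bullet> z = lamF \<bullet> \<delta>0}"
  proof -
    have "H = {z. lamF \<bullet> z = r0 * (b0 + a0 \<bullet> m)}" using Heq0 r0 by auto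
    moreover have "lamF \<bullet> \<delta>0 = r0 * (b0 + a0 \<bullet> m)" using d0(2) Heq0 r0 by auto
    ultimately show ?thesis by simp
  qed
  have dH: "\<delta> \<notin> H" using adj H(1) unfolding adjacent_def by blast
  have ld: "lamF \<bullet> \<delta> \<noteq> lamF \<bullet> \<delta>0" using dH Hlam by auto
  have ld2: "lamF \<bullet> \<delta> \<le> lamF \<bullet> \<delta>0"
  proof -
    obtain y where y: "y \<in> F" "y \<in> (\<lambda>x. \<delta> + x) ` ?N" using Fmeet by blast
    then obtain n where n: "n \<in> ?N" "y = \<delta> + n" by blast
    have "y \<bullet> lamF = c" using normal(3) y(1) by blast
    moreover have "(\<delta>0 + n) \<bullet> lamF \<ge> c" using normal(2) n(1) by blast
    ultimately show ?thesis using n(2) by (simp add: inner_add_left inner_add_right inner_commute)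
  qed
  have ldlt: "lamF \<bullet> \<delta> < lamF \<bullet> \<delta>0" using ld ld2 by simp
  have seguniq: "p = \<delta>0" if "p \<in> closed_segment \<delta> \<delta>'" "p \<in> H" for p
    using seg_hyp_unique[of lamF \<delta> "lamF \<bullet> \<delta>0" p \<delta>' \<delta>0] ld that d0 Hlam by auto
  have Huniq: "H' = H" if "H' \<in> hyps d \<beta>" "H' \<inter> closed_segment \<delta> \<delta>' \<noteq> {}" for H'
    using adj H that unfolding adjacent_def by blast

  have cross: "\<exists>a b r. r \<noteq> 0 \<and> lamF = r *\<^sub>R a \<and> ?N \<subseteq> {x. a \<bullet> x \<le> b} \<and> a \<bullet> (y - \<delta>0) = b \<and> y - \<delta>0 \<in> ?N"
    if y: "y \<in> lattice_pts" and u: "u \<in> closed_segment \<delta> \<delta>'" and v: "v \<in> closed_segment \<delta> \<delta>'"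
      and yu: "y - u \<in> ?N" and yv: "y - v \<notin> ?N" for y u v
  proof -
    have "closed_segment (y - u) (y - v) \<inter> frontier ?N \<noteq> {}"
      by (rule connected_Int_frontier) (use yu yv in auto)
    then obtain p where p: "p \<in> closed_segment (y-u) (y-v)" "p \<in> frontier ?N" by blast
    have "p \<in> ?N - rel_interior ?N" using p(2) closedN intN by (simp add: frontier_def closure_closed)
    then obtain G where G: "G facet_of ?N" "p \<in> G" using rel_boundary_of_polyhedron[OF polyN] by blast
    obtain a b where ab: "a \<noteq> 0" "?N \<subseteq> {x. a \<bullet> x \<le> b}" "G = ?N \<inter> {x. a \<bullet> x = b}"
      using facet_of_polyhedron[OF polyN G(1)] by blast
    define w where "w = y - p"
    have wseg: "w \<in> closed_segment u v"
    proof -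
      obtain s where s: "0 \<le> s" "s \<le> 1" "p = (1-s) *\<^sub>R (y-u) + s *\<^sub>R (y-v)"
        using p(1) by (auto simp: closed_segment_def)
      have "w = (1-s) *\<^sub>R u + s *\<^sub>R v" using s(3) by (simp add: w_def algebra_simps)
      then show ?thesis using s(1,2) by (auto simp: closed_segment_def)
    qed
    have wseg2: "w \<in> closed_segment \<delta> \<delta>'" using wseg u v subset_closed_segment by blast
    define Hy where "Hy = {z. a \<bullet> z = a \<bullet> y - b}"
    have HyH: "Hy \<in> hyps d \<beta>"
    proof -
      define B' where "B' = {x. (-a) \<bullet> x = b}"
      have img: "Hy = (\<lambda>x. y + x) ` B'"
      proof (rule set_eqI)
        fix z show "z \<in> Hy \<longleftrightarrow> z \<in> (\<lambda>x. y + x) ` B'"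
          unfolding Hy_def B'_def
          by (auto simp: image_iff inner_add_right inner_diff_right intro!: exI[of _ "z - y"])
      qed
      have hB: "affine_hyperplane B'" unfolding affine_hyperplane_def B'_def using ab(1)
        by (intro exI[of _ "-a"] exI[of _ b]) auto
      have BN: "B' \<inter> ?N = uminus ` G"
      proof (rule set_eqI)
        fix x show "x \<in> B' \<inter> ?N \<longleftrightarrow> x \<in> uminus ` G"
        proof
          assume "x \<in> B' \<inter> ?N"
          then have "-x \<in> G" using Nneg by (auto simp: B'_def ab(3))
          then show "x \<in> uminus ` G" by (rule rev_image_eqI) simp
        next
          assume "x \<in> uminus ` G"
          then obtain g where "g \<in> G" "x = -g" by blast
          then show "x \<in> B' \<inter> ?N" using Nneg by (auto simp: B'_def ab(3))
        qed
      qed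
      have "(uminus ` G) facet_of ?N" using facet_neg[OF G(1)] Nimg by simp
      then show ?thesis using img y hB BN unfolding hyps_def by (intro CollectI exI[of _ y] exI[of _ B']) auto
    qed
    have aw: "a \<bullet> w = a \<bullet> y - b" using G(2) ab(3) by (auto simp: w_def inner_diff_right)
    then have "Hy \<inter> closed_segment \<delta> \<delta>' \<noteq> {}" using wseg2 Hy_def by auto
    then have HyH2: "Hy = H" using Huniq HyH by blast
    have "w \<in> H" using aw HyH2 Hy_def by auto
    then have "w = \<delta>0" using seguniq wseg2 by blast
    then have pd: "p = y - \<delta>0" by (auto simp: w_def)
    obtain r where r: "r \<noteq> 0" "lamF = r *\<^sub>R a"
      using hyp_sub[OF ab(1) normal(1), of "a \<bullet> y - b" "lamF \<bullet> \<delta>0"] HyH2 Hlam Hy_def by auto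
    show ?thesis using r ab G pd by (intro exI[of _ a] exI[of _ b] exI[of _ r]) auto
  qed
  show ?thesis
  proof (intro ballI)
    fix chi b assume chi: "chi \<in> Cset d \<beta> \<delta> - Cset d \<beta> \<delta>'" and b: "b \<in> wedge_star d \<beta> lamF"
    have chiL: "chi \<in> lattice_pts" using chi by (auto simp: Cset_def)
    have chiN: "chi - \<delta> \<in> ?N" using chi by (auto simp: Cset_def)
    have chiN': "chi - \<delta>' \<notin> ?N"
    proof
      assume "chi - \<delta>' \<in> ?N"
      then have "\<delta>' + (chi - \<delta>') \<in> (\<lambda>x. \<delta>' + x) ` ?N" by blast
      then have "chi \<in> Cset d \<beta> \<delta>'" using chiL by (simp add: Cset_def)
      then show False using chi by blast
    qed
    have dseg: "\<delta> \<in> closed_segment \<delta> \<delta>'" "\<delta>' \<in> closed_segment \<delta> \<delta>'" by auto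
    obtain a1 b1 r1 where r1: "r1 \<noteq> 0" "lamF = r1 *\<^sub>R a1" and ab1: "?N \<subseteq> {x. a1 \<bullet> x \<le> b1}"
      and a1x: "a1 \<bullet> (chi - \<delta>0) = b1" and xN: "chi - \<delta>0 \<in> ?N"
      using cross[OF chiL dseg chiN chiN'] by blast
    define x where "x = chi - \<delta>0"
    have r1neg: "r1 < 0"
    proof (rule ccontr)
      assume "\<not> r1 < 0" then have rp: "r1 > 0" using r1(1) by simp
      have "a1 \<bullet> (chi - \<delta>) \<le> b1" using ab1 chiN by auto
      then have "a1 \<bullet> \<delta>0 \<le> a1 \<bullet> \<delta>" using a1x by (simp add: inner_diff_right)
      then have "r1 * (a1 \<bullet> \<delta>0) \<le> r1 * (a1 \<bullet> \<delta>)" using rp by (simp add: mult_left_mono)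
      then show False using ldlt r1(2) by simp
    qed
    have xmin: "x \<bullet> lamF \<le> z \<bullet> lamF" if "z \<in> ?N" for z
    proof -
      have "a1 \<bullet> z \<le> b1" using that ab1 by auto
      then have "r1 * b1 \<le> r1 * (a1 \<bullet> z)" using r1neg by (simp add: mult_left_mono_neg)
      moreover have "x \<bullet> lamF = r1 * b1" using a1x r1(2) by (simp add: x_def inner_commute)
      moreover have "z \<bullet> lamF = r1 * (a1 \<bullet> z)" using r1(2) by (simp add: inner_commute)
      ultimately show ?thesis by simp
    qed
    define lb where "lb i = \<beta> i \<bullet> lamF" for i
    obtain \<alpha> where \<alpha>: "\<forall>i<d. 0 \<le> \<alpha> i \<and> \<alpha> i \<le> 1" and x\<alpha>: "x = (\<Sum>i<d. (\<alpha> i / 2) *\<^sub>R \<beta> i)"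
      using xN nabla_mem unfolding x_def by blast
    define ng where "ng i = (if lb i < 0 then 1 else 0::real)" for i
    define ps where "ps i = (if lb i > 0 then 1 else 0::real)" for i
    define z0 where "z0 = (\<Sum>i<d. (ng i / 2) *\<^sub>R \<beta> i)"
    define z1 where "z1 = (\<Sum>i<d. (ps i / 2) *\<^sub>R \<beta> i)"
    have z0N: "z0 \<in> ?N" unfolding z0_def nabla_mem by (intro exI[of _ ng]) (auto simp: ng_def)
    have z1N: "z1 \<in> ?N" unfolding z1_def nabla_mem by (intro exI[of _ ps]) (auto simp: ps_def)
    have dotsum: "(\<Sum>i<d. (f i / 2) *\<^sub>R \<beta> i) \<bullet> lamF = (\<Sum>i<d. f i / 2 * lb i)" for f
      by (simp add: inner_sum_left lb_def)
    have "(\<Sum>i<d. lb i) = (\<Sum>i<d. \<beta> i) \<bullet> lamF" by (simp add: lb_def inner_sum_left)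
    then have sumlb: "(\<Sum>i<d. lb i) = 0" using sumb by simp
    have psng: "(\<Sum>i<d. ps i * lb i) = - (\<Sum>i<d. ng i * lb i)"
    proof -
      have "(\<Sum>i<d. ps i * lb i) + (\<Sum>i<d. ng i * lb i) = (\<Sum>i<d. lb i)"
        unfolding sum.distrib[symmetric] by (rule sum.cong) (auto simp: ps_def ng_def)
      then show ?thesis using sumlb by simp
    qed
    have z0d: "z0 \<bullet> lamF = (\<Sum>i<d. ng i * lb i) / 2"
      unfolding z0_def dotsum by (simp add: sum_divide_distrib)
    have "z1 \<bullet> lamF = (\<Sum>i<d. ps i * lb i) / 2"
      unfolding z1_def dotsum by (simp add: sum_divide_distrib)
    then have z1d: "z1 \<bullet> lamF = - (\<Sum>i<d. ng i * lb i) / 2" using psng by simp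
    have xd: "x \<bullet> lamF = (\<Sum>i<d. \<alpha> i / 2 * lb i)" unfolding x\<alpha> dotsum ..
    have termge: "ng i / 2 * lb i \<le> \<alpha> i / 2 * lb i" if "i < d" for i
    proof (cases "lb i < 0")
      case True
      then have "1 * lb i \<le> \<alpha> i * lb i" using \<alpha> that by (intro mult_right_mono_neg) auto
      then show ?thesis using True by (simp add: ng_def)
    next
      case False
      then show ?thesis using \<alpha> that by (simp add: ng_def)
    qed
    have "x \<bullet> lamF \<le> z0 \<bullet> lamF" using xmin z0N by blast
    then have "(\<Sum>i<d. \<alpha> i / 2 * lb i - ng i / 2 * lb i) \<le> 0"
      unfolding xd z0_def dotsum by (simp add: sum_subtractf)
    moreover have "(\<Sum>i<d. \<alpha> i / 2 * lb i - ng i / 2 * lb i) \<ge> 0"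
      using termge by (intro sum_nonneg) auto
    ultimately have "(\<Sum>i<d. \<alpha> i / 2 * lb i - ng i / 2 * lb i) = 0" by simp
    then have termeq: "\<alpha> i / 2 * lb i - ng i / 2 * lb i = 0" if "i<d" for i
      using sum_nonneg_eq_0_iff[of "{..<d}" "\<lambda>i. \<alpha> i / 2 * lb i - ng i / 2 * lb i"] termge that by auto
    have \<alpha>pos: "\<alpha> i = 0" if "i<d" "lb i > 0" for i
      using termeq[OF that(1)] that(2) by (simp add: ng_def)
    have \<alpha>neg: "\<alpha> i = 1" if "i<d" "lb i < 0" for i
      using termeq[OF that(1)] that(2) by (simp add: ng_def)
    have xz0: "x \<bullet> lamF = z0 \<bullet> lamF"
    proof -
      have "(\<Sum>i<d. \<alpha> i / 2 * lb i) = (\<Sum>i<d. ng i / 2 * lb i)"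
        by (rule sum.cong) (use termeq in auto)
      then show ?thesis unfolding xd z0_def dotsum .
    qed
    obtain S where S: "b = (\<Sum>i\<in>S. \<beta> i)" "S \<subseteq> Wplus d \<beta> lamF" "1 \<le> card S"
        "card S \<le> card (Wplus d \<beta> lamF) - 1"
      using b unfolding wedge_star_def by blast
    have finW: "finite (Wplus d \<beta> lamF)" unfolding Wplus_def by auto
    have Spos: "i < d \<and> lb i > 0" if "i \<in> S" for i using S(2) that by (auto simp: Wplus_def lb_def)
    have Sd: "S \<subseteq> {..<d}" using Spos by auto
    have finS: "finite S" using Sd finite_subset by blast
    have Sne: "S \<noteq> {}" using S(3) by auto
    obtain j where j: "j \<in> Wplus d \<beta> lamF" "j \<notin> S"
    proof -
      have lt: "card S < card (Wplus d \<beta> lamF)" using S(3,4) by (cases "card (Wplus d \<beta> lamF)") auto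
      have "\<not> Wplus d \<beta> lamF \<subseteq> S"
      proof
        assume "Wplus d \<beta> lamF \<subseteq> S"
        then have "card (Wplus d \<beta> lamF) \<le> card S" by (rule card_mono[OF finS])
        then show False using lt by simp
      qed
      then obtain j where "j \<in> Wplus d \<beta> lamF" "j \<notin> S" by blast
      then show ?thesis by (rule that)
    qed
    define y where "y = chi + b"
    have yL: "y \<in> lattice_pts"
    proof -
      have "\<beta> i $ k \<in> \<int>" if "i \<in> S" for i k using weights Spos that by (auto simp: lattice_pts_def)
      then have "b $ k \<in> \<int>" for k unfolding S(1) by (auto simp: sum_component)
      then show ?thesis using chiL by (auto simp: lattice_pts_def y_def)
    qed
    have Wsum: "(\<Sum>i\<in>Wplus d \<beta> lamF. lb i) = (\<Sum>i<d. ps i * lb i)"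
    proof -
      have "(\<Sum>i<d. ps i * lb i) = (\<Sum>i<d. if lb i > 0 then lb i else 0)"
        by (rule sum.cong) (auto simp: ps_def)
      also have "\<dots> = sum lb ({..<d} \<inter> {i. lb i > 0})" by (simp add: sum.inter_restrict)
      also have "{..<d} \<inter> {i. lb i > 0} = Wplus d \<beta> lamF" by (auto simp: Wplus_def lb_def)
      finally show ?thesis by simp
    qed
    have bdot: "b \<bullet> lamF = (\<Sum>i\<in>S. lb i)" by (simp add: S(1) inner_sum_left lb_def)
    have bpos: "0 < (\<Sum>i\<in>S. lb i)" using finS Sne Spos by (intro sum_pos) auto
    have blt: "(\<Sum>i\<in>S. lb i) < (\<Sum>i\<in>Wplus d \<beta> lamF. lb i)"
    proof -
      have "(\<Sum>i\<in>Wplus d \<beta> lamF. lb i) = (\<Sum>i\<in>S. lb i) + (\<Sum>i\<in>Wplus d \<beta> lamF - S. lb i)"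
        using S(2) finW by (metis sum.subset_diff add.commute)
      moreover have "0 < (\<Sum>i\<in>Wplus d \<beta> lamF - S. lb i)"
        using finW j by (intro sum_pos) (auto simp: Wplus_def lb_def)
      ultimately show ?thesis by simp
    qed
    have yd0: "y - \<delta>0 = x + b" by (simp add: y_def x_def)
    have ylow: "z0 \<bullet> lamF < (y - \<delta>0) \<bullet> lamF"
      unfolding yd0 inner_add_left xz0 bdot using bpos by simp
    have yhigh: "(y - \<delta>0) \<bullet> lamF < z1 \<bullet> lamF"
      unfolding yd0 inner_add_left xz0 bdot z0d z1d using blt Wsum psng by simp
    have yN0: "y - \<delta>0 \<in> ?N"
    proof -
      define L where "L i = {j. j<d \<and> \<beta> j \<in> span {\<beta> i}}" for i
      define vv where "vv i = (\<Sum>j\<in>L i. if j \<in> S then \<beta> j else 0)" for i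
      define ww where "ww i = (\<Sum>j\<in>L i. if lb j > 0 then \<beta> j else 0)" for i
      define \<rho> where "\<rho> i = (vv i \<bullet> lamF) / (ww i \<bullet> lamF)" for i
      define \<gamma> where "\<gamma> i = (if lb i > 0 then \<rho> i else if lb i < 0 then 1 - \<rho> i else \<alpha> i)" for i
      have vvdot: "vv i \<bullet> lamF = (\<Sum>j\<in>L i. if j \<in> S then lb j else 0)" for i
        unfolding vv_def inner_sum_left by (rule sum.cong) (auto simp: lb_def)
      have wwdot: "ww i \<bullet> lamF = (\<Sum>j\<in>L i. if lb j > 0 then lb j else 0)" for i
        unfolding ww_def inner_sum_left by (rule sum.cong) (auto simp: lb_def)
      have v0: "0 \<le> vv i \<bullet> lamF" for i unfolding vvdot using Spos by (intro sum_nonneg) (auto simp: less_imp_le)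
      have vw: "vv i \<bullet> lamF \<le> ww i \<bullet> lamF" for i unfolding vvdot wwdot using Spos by (intro sum_mono) (auto simp: less_imp_le)
      have \<rho>01: "0 \<le> \<rho> i \<and> \<rho> i \<le> 1" for i
      proof (cases "ww i \<bullet> lamF = 0")
        case True then show ?thesis by (simp add: \<rho>_def)
      next
        case False
        then have "ww i \<bullet> lamF > 0" using v0[of i] vw[of i] by simp
        then show ?thesis using v0[of i] vw[of i] by (simp add: \<rho>_def)
      qed
      have \<gamma>01: "0 \<le> \<gamma> i \<and> \<gamma> i \<le> 1" if "i<d" for i using \<rho>01[of i] \<alpha> that by (auto simp: \<gamma>_def)
      have zero\<beta>: "\<beta> j = 0" if jL: "j \<in> L i" and hh: "lb i \<noteq> 0" "lb j = 0" for i j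
      proof -
        obtain k where k: "\<beta> j = k *\<^sub>R \<beta> i" using jL by (auto simp: L_def span_singleton)
        have "lb j = k * lb i" by (simp add: lb_def k)
        then have "k = 0" using hh by simp
        then show ?thesis using k by simp
      qed
      have Leq: "L j = L i" if "j \<in> L i" "\<beta> j \<noteq> 0" for i j
        using span_single_eq[of "\<beta> j" "\<beta> i"] that by (auto simp: L_def)
      define g where "g i = (\<gamma> i / 2) *\<^sub>R \<beta> i - (\<alpha> i / 2) *\<^sub>R \<beta> i - (if i \<in> S then \<beta> i else 0)" for i
      have gsum: "(\<Sum>i<d. g i) = 0"
      proof (rule class_sum_zero[where \<beta> = \<beta>])
        fix j assume "j<d" "\<beta> j = 0" then show "g j = 0" by (simp add: g_def)
      next
        fix i assume i: "i<d" "\<beta> i \<noteq> 0"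
        have "(\<Sum>j\<in>L i. g j) = 0"
        proof (cases "lb i = 0")
          case True
          have "g j = 0" if jL: "j \<in> L i" for j
          proof -
            obtain k where k: "\<beta> j = k *\<^sub>R \<beta> i" using jL by (auto simp: L_def span_singleton)
            have lbj: "lb j = 0" using True by (simp add: lb_def k)
            then have "j \<notin> S" using Spos[of j] by auto
            moreover have "\<gamma> j = \<alpha> j" using lbj by (simp add: \<gamma>_def)
            ultimately show ?thesis by (simp add: g_def)
          qed
          then show ?thesis by simp
        next
          case False
          have qsL: "(\<Sum>j\<in>L i. \<beta> j) = 0"
            using qs i(2) unfolding quasi_symmetric_def L_def by (elim allE[of _ "\<beta> i"]) simp
          have gj: "g j = \<rho> i *\<^sub>R (if lb j > 0 then \<beta> j else 0) - (\<rho> i / 2) *\<^sub>R \<beta> j - (if j \<in> S then \<beta> j else 0)"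
            if j: "j \<in> L i" for j
          proof (cases "lb j = 0")
            case True
            then have "\<beta> j = 0" using zero\<beta>[OF j False] by simp
            then show ?thesis by (simp add: g_def)
          next
            case nz: False
            have \<beta>j: "\<beta> j \<noteq> 0" using nz by (auto simp: lb_def)
            have \<rho>j: "\<rho> j = \<rho> i" using Leq[OF j \<beta>j] by (simp add: \<rho>_def vv_def ww_def)
            have jd: "j < d" using j by (simp add: L_def)
            show ?thesis
            proof (cases "lb j > 0")
              case True
              then have "\<alpha> j = 0" "\<gamma> j = \<rho> i" using \<alpha>pos jd \<rho>j by (auto simp: \<gamma>_def)
              have e: "\<rho> i *\<^sub>R \<beta> j = (\<rho> i/2) *\<^sub>R \<beta> j + (\<rho> i/2) *\<^sub>R \<beta> j"
                by (simp add: scaleR_add_left[symmetric])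
              show ?thesis using True \<open>\<alpha> j = 0\<close> \<open>\<gamma> j = \<rho> i\<close> by (simp add: g_def e)
            next
              case False
              then have neg: "lb j < 0" using nz by simp
              then have "\<alpha> j = 1" "\<gamma> j = 1 - \<rho> i" "j \<notin> S" using \<alpha>neg jd \<rho>j Spos[of j] by (auto simp: \<gamma>_def)
              moreover have "((1 - \<rho> i) / 2) *\<^sub>R \<beta> j - (1 / 2) *\<^sub>R \<beta> j = - ((\<rho> i / 2) *\<^sub>R \<beta> j)"
                by (simp add: scaleR_left_diff_distrib[symmetric] diff_divide_distrib)
              ultimately show ?thesis using neg by (simp add: g_def)
            qed
          qed
          have "(\<Sum>j\<in>L i. g j) = (\<Sum>j\<in>L i. \<rho> i *\<^sub>R (if lb j > 0 then \<beta> j else 0) - (\<rho> i / 2) *\<^sub>R \<beta> j - (if j \<in> S then \<beta> j else 0))"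
            by (rule sum.cong) (simp_all add: gj)
          also have "\<dots> = \<rho> i *\<^sub>R ww i - (\<rho> i / 2) *\<^sub>R (\<Sum>j\<in>L i. \<beta> j) - vv i"
            unfolding sum_subtractf ww_def vv_def scaleR_sum_right ..
          also have "\<dots> = \<rho> i *\<^sub>R ww i - vv i" using qsL by simp
          also have "\<dots> = 0"
          proof -
            have wsp: "ww i \<in> span {\<beta> i}" unfolding ww_def
            proof (rule span_sum)
              fix j assume "j \<in> L i"
              then have "\<beta> j \<in> span {\<beta> i}" by (simp add: L_def)
              then show "(if lb j > 0 then \<beta> j else 0) \<in> span {\<beta> i}" by (simp add: span_zero)
            qed
            have vsp: "vv i \<in> span {\<beta> i}" unfolding vv_def
            proof (rule span_sum)
              fix j assume "j \<in> L i"
              then have "\<beta> j \<in> span {\<beta> i}" by (simp add: L_def)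
              then show "(if j \<in> S then \<beta> j else 0) \<in> span {\<beta> i}" by (simp add: span_zero)
            qed
            obtain kw where kw: "ww i = kw *\<^sub>R \<beta> i" using wsp by (auto simp: span_singleton)
            obtain kv where kv: "vv i = kv *\<^sub>R \<beta> i" using vsp by (auto simp: span_singleton)
            have wd: "ww i \<bullet> lamF = kw * lb i" by (simp add: kw lb_def)
            have vd: "vv i \<bullet> lamF = kv * lb i" by (simp add: kv lb_def)
            show ?thesis
            proof (cases "kw = 0")
              case True
              have "ww i \<bullet> lamF = 0" using wd True by simp
              then have "vv i \<bullet> lamF = 0" using v0[of i] vw[of i] by linarith
              then have "kv * lb i = 0" using vd by simp
              then have kv0: "kv = 0" using False by simp
              show ?thesis unfolding kv kw using True kv0 by simp
            next
              case kw0: False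
              have "\<rho> i = (kv * lb i) / (kw * lb i)" unfolding \<rho>_def wd vd ..
              also have "\<dots> = kv / kw" using False by simp
              finally have r: "\<rho> i = kv / kw" .
              have "\<rho> i *\<^sub>R ww i = kv *\<^sub>R \<beta> i" unfolding r kw using kw0 by simp
              then show ?thesis unfolding kv by simp
            qed
          qed
          finally show ?thesis .
        qed
        then show "(\<Sum>j\<in>{j. j<d \<and> \<beta> j \<in> span {\<beta> i}}. g j) = 0" by (simp add: L_def)
      qed
      have bS: "(\<Sum>i<d. if i \<in> S then \<beta> i else 0) = b"
      proof -
        have "(\<Sum>i<d. if i \<in> S then \<beta> i else 0) = sum \<beta> ({..<d} \<inter> S)" by (simp add: sum.inter_restrict)
        also have "{..<d} \<inter> S = S" using Sd by auto
        finally show ?thesis using S(1) by simp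
      qed
      have "(\<Sum>i<d. g i) = (\<Sum>i<d. (\<gamma> i / 2) *\<^sub>R \<beta> i) - (\<Sum>i<d. (\<alpha> i / 2) *\<^sub>R \<beta> i) - (\<Sum>i<d. if i \<in> S then \<beta> i else 0)"
        by (simp add: g_def sum_subtractf)
      then have "(\<Sum>i<d. (\<gamma> i / 2) *\<^sub>R \<beta> i) - x - b = 0" using gsum x\<alpha> bS by simp
      then have "(\<Sum>i<d. (\<gamma> i / 2) *\<^sub>R \<beta> i) = x + b" by (simp add: algebra_simps)
      note eqx = this
      show ?thesis unfolding yd0 nabla_mem
        by (rule exI[of _ \<gamma>]) (use \<gamma>01 eqx in auto)
    qed
    have yin: "y - e \<in> ?N" if e: "e \<in> closed_segment \<delta> \<delta>'" for e
    proof (rule ccontr)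
      assume ne: "y - e \<notin> ?N"
      obtain a2 b2 r2 where r2: "r2 \<noteq> 0" "lamF = r2 *\<^sub>R a2" and ab2: "?N \<subseteq> {x. a2 \<bullet> x \<le> b2}"
        and a2x: "a2 \<bullet> (y - \<delta>0) = b2"
        using cross[OF yL d0(1) e yN0 ne] by blast
      have dotr: "w \<bullet> lamF = r2 * (a2 \<bullet> w)" for w using r2(2) by (simp add: inner_commute)
      show False
      proof (cases "r2 > 0")
        case True
        have "a2 \<bullet> z1 \<le> b2" using z1N ab2 by auto
        then have "r2 * (a2 \<bullet> z1) \<le> r2 * b2" using True by (simp add: mult_left_mono)
        then have "z1 \<bullet> lamF \<le> (y - \<delta>0) \<bullet> lamF" using dotr a2x by simp
        then show False using yhigh by simp
      next
        case False
        then have rn: "r2 < 0" using r2(1) by simp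
        have "a2 \<bullet> z0 \<le> b2" using z0N ab2 by auto
        then have "r2 * b2 \<le> r2 * (a2 \<bullet> z0)" using rn by (simp add: mult_left_mono_neg)
        then have "(y - \<delta>0) \<bullet> lamF \<le> z0 \<bullet> lamF" using dotr a2x by simp
        then show False using ylow by simp
      qed
    qed
    have m1: "chi + b \<in> (\<lambda>x. \<delta> + x) ` ?N"
      using yin[OF dseg(1)] by (intro rev_image_eqI[of "y - \<delta>"]) (auto simp: y_def)
    have m2: "chi + b \<in> (\<lambda>x. \<delta>' + x) ` ?N"
      using yin[OF dseg(2)] by (intro rev_image_eqI[of "y - \<delta>'"]) (auto simp: y_def)
    show "chi + b \<in> Cset d \<beta> \<delta> \<inter> Cset d \<beta> \<delta>'"
      using m1 m2 yL by (simp add: Cset_def y_def)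
  qed
qed

end
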